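(* Assume $\chi$ is weakly generic, let $\sigma=\sigma_{a,b}$ be a Serre weight with $\mathcal{S}(\chi_1,\chi_2,\sigma)\neq\varnothing$, let $(J,x)$ be its maximal element, and let $s,t,r,\mathcal{I}_\tau,\xi_\tau$ be as in the context. Then for every $\tau\in\Sigma$ and every $c\in\mathcal{I}_\tau$ we have $v_p(\xi_\tau-c(p^f-1))>0$ if and only if either $c=t_\tau$, or [$t_\kappa=0$, $s_\kappa=p-1+e$ and $r_\kappa=p$ for all $\kappa\in\Sigma$, and $c=p$].
   Context: Let $p$ be a prime, $K/\mathbf{Q}_p$ finite with residue field $k$, residue degree $f$, ramification index $e$; $I_K$ inertia; $v_p$ is the $p$-adic valuation on $\mathbf{Q}$. Fix $\varpi\in\overline{K}$ with $\varpi^{p^f-1}$ a uniformiser; $\omega\colon G_K\to k^\times$ sends $g$ to the reduction of $g(\varpi)/\varpi$. $\Sigma=\mathrm{Hom}_{\mathbf{F}_p}(k,\overline{\mathbf{F}}_p)$, $\varphi(x)=x^p$, $\omega_\tau=\tau\circ\omega$, $\Omega_{\tau,a}=\sum_{i=0}^{f-1}p^ia_{\tau\circ\varphi^i}$. $\chi_1,\chi_2\colon G_K\to\overline{\mathbf{F}}_p^\times$ continuous, $\chi=\chi_1\chi_2^{-1}=\psi\prod_\tau\omega_\tau^{n_\tau}$, $\psi$ unramified, $n_\tau\in[1,p]$, some $n_\tau<p$. Weakly generic: $n_\tau\in[e,p-e]$ for all $\tau$. Serre weight $\sigma_{a,b}=\bigotimes_\tau(\det^{b_\tau}\otimes\mathrm{Sym}^{a_\tau-b_\tau}k^2)\otimes_{k,\tau}\overline{\mathbf{F}}_p$,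 $a_\tau-b_\tau\in[0,p-1]$; $r_\tau=a_\tau-b_\tau+1$. $\mathcal{S}(\chi_1,\chi_2,\sigma)$: pairs $(J,x)$, $J\subseteq\Sigma$, $x_\tau\in[0,e-1]$, with $\chi_1|_{I_K}=\prod_{\tau\in J}\omega_\tau^{a_\tau+1+x_\tau}\prod_{\tau\notin J}\omega_\tau^{b_\tau+x_\tau}$ and $\chi_2|_{I_K}=\prod_{\tau\notin J}\omega_\tau^{a_\tau+e-x_\tau}\prod_{\tau\in J}\omega_\tau^{b_\tau+e-1-x_\tau}$. $s(J,x)_\tau=r_\tau+x_\tau$ if $\tau\in J$, $x_\tau$ if $\tau\notin J$. Order: $(J,x)\preceq(J',x')$ iff $\Omega_{\tau,s(J',x')-s(J,x)}\in(p^f-1)\mathbf{Z}_{\ge0}$ for all $\tau$; a non-empty $\mathcal{S}$ has a unique maximal element. For the maximal $(J,x)$: $s=s(J,x)$, $t_\tau=a_\tau-b_\tau+e-s_\tau$, $\mathcal{I}_\tau=[0,s_\tau-1]$ if $\tau\notin J$, $\mathcal{I}_\tau=\{t_\tau\}\cup[r_\tau,s_\tau-1]$ if $\tau\in J$, and $\xi_\tau=(p^f-1)s_\tau+\Omega_{\tau,s-t}$. *)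

theory Defs
  imports "HOL-Computational_Algebra.Primes" "HOL-Library.Extended_Nat"
begin

text \<open>The embeddings \<Sigma> = Hom(k, Fbar_p) are indexed by {0..<f}:
  fix tau_0 and let index j stand for tau_0 \<circ> phi^j, so that tau_j \<circ> phi^i = tau_((j+i) mod f).
  Families (a_tau) are functions nat \<Rightarrow> int, only values at j < f matter.
  Since omega_(tau \<circ> phi) = omega_tau^p and omega_(tau_0) restricted to inertia has exact order
  p^f - 1, a character of G_K restricted to I_K is omega_(tau_0)^h for an integer h determined
  modulo p^f - 1, and prod_tau omega_tau^(y_tau) = omega_(tau_0)^(Omega_(tau_0,y)).\<close>

definition vp :: "nat \<Rightarrow> int \<Rightarrow> enat" where
  "vp p n = (if n = 0 then \<infinity> else enat (multiplicity (int p) n))"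

definition Omega :: "nat \<Rightarrow> nat \<Rightarrow> (nat \<Rightarrow> int) \<Rightarrow> nat \<Rightarrow> int" where
  "Omega p f a j = (\<Sum>i<f. int p ^ i * a ((j + i) mod f))"

text \<open>The set S(chi_1, chi_2, sigma_(a,b)), where chi_i restricted to I_K is omega_(tau_0)^(h_i).\<close>
definition serre_S :: "nat \<Rightarrow> nat \<Rightarrow> nat \<Rightarrow> int \<Rightarrow> int \<Rightarrow> (nat \<Rightarrow> int) \<Rightarrow> (nat \<Rightarrow> int)
    \<Rightarrow> (nat set \<times> (nat \<Rightarrow> int)) set" where
  "serre_S p f e h1 h2 a b = {(J, x).
      J \<subseteq> {..<f} \<and> (\<forall>j. f \<le> j \<longrightarrow> x j = 0) \<and>
      (\<forall>j<f. 0 \<le> x j \<and> x j \<le> int e - 1) \<and>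
      h1 mod (int p ^ f - 1) =
        Omega p f (\<lambda>j. if j \<in> J then a j + 1 + x j else b j + x j) 0 mod (int p ^ f - 1) \<and>
      h2 mod (int p ^ f - 1) =
        Omega p f (\<lambda>j. if j \<notin> J then a j + int e - x j else b j + int e - 1 - x j) 0
          mod (int p ^ f - 1)}"

definition rr :: "(nat \<Rightarrow> int) \<Rightarrow> (nat \<Rightarrow> int) \<Rightarrow> nat \<Rightarrow> int" where
  "rr a b j = a j - b j + 1"

definition sJ :: "(nat \<Rightarrow> int) \<Rightarrow> (nat \<Rightarrow> int) \<Rightarrow> nat set \<Rightarrow> (nat \<Rightarrow> int) \<Rightarrow> nat \<Rightarrow> int" where
  "sJ a b J x j = (if j \<in> J then rr a b j + x j else x j)"

definition serre_le :: "nat \<Rightarrow> nat \<Rightarrow> (nat \<Rightarrow> int) \<Rightarrow> (nat \<Rightarrow> int)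
    \<Rightarrow> (nat set \<times> (nat \<Rightarrow> int)) \<Rightarrow> (nat set \<times> (nat \<Rightarrow> int)) \<Rightarrow> bool" where
  "serre_le p f a b u v = (\<forall>j<f. \<exists>m::int. 0 \<le> m \<and>
      Omega p f (\<lambda>i. sJ a b (fst v) (snd v) i - sJ a b (fst u) (snd u) i) j = (int p ^ f - 1) * m)"

definition tJ :: "nat \<Rightarrow> (nat \<Rightarrow> int) \<Rightarrow> (nat \<Rightarrow> int) \<Rightarrow> nat set \<Rightarrow> (nat \<Rightarrow> int) \<Rightarrow> nat \<Rightarrow> int" where
  "tJ e a b J x j = a j - b j + int e - sJ a b J x j"

definition IJ :: "nat \<Rightarrow> (nat \<Rightarrow> int) \<Rightarrow> (nat \<Rightarrow> int) \<Rightarrow> nat set \<Rightarrow> (nat \<Rightarrow> int) \<Rightarrow> nat \<Rightarrow> int set" where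
  "IJ e a b J x j = (if j \<notin> J then {0 .. sJ a b J x j - 1}
                     else insert (tJ e a b J x j) {rr a b j .. sJ a b J x j - 1})"

definition xiJ :: "nat \<Rightarrow> nat \<Rightarrow> nat \<Rightarrow> (nat \<Rightarrow> int) \<Rightarrow> (nat \<Rightarrow> int) \<Rightarrow> nat set \<Rightarrow> (nat \<Rightarrow> int) \<Rightarrow> nat \<Rightarrow> int" where
  "xiJ p f e a b J x j = (int p ^ f - 1) * sJ a b J x j
      + Omega p f (\<lambda>i. sJ a b J x i - tJ e a b J x i) j"

end

theory Submission
  imports Defs
begin

lemma vp_pos_iff:
  assumes "prime p"
  shows "vp p v > 0 \<longleftrightarrow> int p dvd v"
proof (cases "v = 0")
  case True then show ?thesis by (simp add: vp_def)
next
  case False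
  have "prime_elem (int p)" using assms by simp
  then show ?thesis using False
    by (simp add: vp_def prime_multiplicity_gt_zero_iff enat_0_iff zero_less_iff_neq_zero[symmetric])
qed

lemma Omega_diff: "Omega p f (\<lambda>i. u i - v i) j = Omega p f u j - Omega p f v j"
  by (simp add: Omega_def sum_subtractf right_diff_distrib)

lemma Omega_mod: "Omega p f w (j mod f) = Omega p f w j"
  unfolding Omega_def by (simp add: mod_add_left_eq)

lemma Omega_rec:
  assumes "1 \<le> f"
  shows "int p * Omega p f w (Suc j) = Omega p f w j + (int p ^ f - 1) * w (j mod f)"
proof -
  have "Omega p f w j + int p ^ f * w (j mod f) = (\<Sum>i<Suc f. int p ^ i * w ((j + i) mod f))"
    by (simp add: Omega_def)
  also have "\<dots> = w (j mod f) + (\<Sum>i<f. int p ^ Suc i * w ((j + Suc i) mod f))"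
    by (subst sum.lessThan_Suc_shift) simp
  also have "\<dots> = w (j mod f) + int p * Omega p f w (Suc j)"
    by (simp add: Omega_def sum_distrib_left mult.assoc)
  finally show ?thesis by (simp add: algebra_simps)
qed

lemma Omega_modp:
  assumes "j < f"
  shows "int p dvd (Omega p f y j - y j)"
proof -
  obtain f' where f: "f = Suc f'" using assms by (cases f) auto
  have "Omega p f y j = y j + (\<Sum>i<f'. int p ^ Suc i * y ((j + Suc i) mod f))"
    unfolding Omega_def f by (subst sum.lessThan_Suc_shift) (use assms f in simp)
  moreover have "int p dvd (\<Sum>i<f'. int p ^ Suc i * y ((j + Suc i) mod f))"
    by (intro dvd_sum) simp
  ultimately show ?thesis by simp
qed

lemma coprime_pN:
  assumes "1 \<le> f"
  shows "coprime (int p) (int p ^ f - 1)"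
proof (rule coprimeI)
  fix d assume "d dvd int p" "d dvd int p ^ f - 1"
  moreover have "int p dvd int p ^ f" using assms by (simp add: dvd_power)
  ultimately have "d dvd int p ^ f" "d dvd int p ^ f - 1" using dvd_trans by blast+
  then have "d dvd int p ^ f - (int p ^ f - 1)" by (rule dvd_diff)
  then show "is_unit d" by simp
qed

theorem proposition5p11:
  fixes p f e :: nat and h1 h2 :: int and n a b x :: "nat \<Rightarrow> int" and J :: "nat set"
  assumes "prime p" and "1 \<le> f" and "1 \<le> e"
    and chi: "(h1 - h2) mod (int p ^ f - 1) = Omega p f n 0 mod (int p ^ f - 1)"
    and n_range: "\<forall>j<f. 1 \<le> n j \<and> n j \<le> int p"
    and n_lt: "\<exists>j<f. n j < int p"
    and weakly_generic: "\<forall>j<f. int e \<le> n j \<and> n j \<le> int p - int e"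
    and serre_wt: "\<forall>j<f. 0 \<le> a j - b j \<and> a j - b j \<le> int p - 1"
    and nonempty: "serre_S p f e h1 h2 a b \<noteq> {}"
    and mem: "(J, x) \<in> serre_S p f e h1 h2 a b"
    and maximal: "\<forall>y \<in> serre_S p f e h1 h2 a b. serre_le p f a b y (J, x)"
  shows "\<forall>j<f. \<forall>c \<in> IJ e a b J x j.
           (vp p (xiJ p f e a b J x j - c * (int p ^ f - 1)) > 0 \<longleftrightarrow>
             (c = tJ e a b J x j \<or>
              ((\<forall>k<f. tJ e a b J x k = 0 \<and> sJ a b J x k = int p - 1 + int e \<and> rr a b k = int p)
               \<and> c = int p)))"
proof -
  define N where "N = int p ^ f - 1"
  have p2: "p \<ge> 2" using assms(1) prime_ge_2_nat by blast
  have "int p ^ f \<ge> int p ^ 1" using p2 assms(2) by (intro power_increasing) auto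
  then have "int p ^ f \<ge> int p" by simp
  then have Npos: "N > 0" using p2 unfolding N_def by linarith
  define al where "al = (\<lambda>j. if j \<in> J then a j + 1 + x j else b j + x j)"
  define be where "be = (\<lambda>j. if j \<notin> J then a j + int e - x j else b j + int e - 1 - x j)"
  define w where "w = (\<lambda>j. al j - be j - n j)"
  from mem have Jf: "J \<subseteq> {..<f}" and xr: "\<forall>j<f. 0 \<le> x j \<and> x j \<le> int e - 1"
    and H1: "h1 mod N = Omega p f al 0 mod N" and H2: "h2 mod N = Omega p f be 0 mod N"
    unfolding serre_S_def N_def al_def be_def by auto
  have "N dvd Omega p f w 0"
  proof -
    have "N dvd h1 - Omega p f al 0" "N dvd h2 - Omega p f be 0" "N dvd (h1 - h2) - Omega p f n 0"
      using H1 H2 chi unfolding N_def by (simp_all add: mod_eq_dvd_iff)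
    then have "N dvd (h1 - Omega p f al 0) - (h2 - Omega p f be 0) - ((h1 - h2) - Omega p f n 0)"
      by (metis dvd_diff)
    moreover have "Omega p f w 0 = Omega p f al 0 - Omega p f be 0 - Omega p f n 0"
      unfolding w_def by (simp add: Omega_diff)
    then have "Omega p f w 0 = - ((h1 - Omega p f al 0) - (h2 - Omega p f be 0) - ((h1 - h2) - Omega p f n 0))"
      by (simp add: algebra_simps)
    ultimately show ?thesis by (metis dvd_minus_iff)
  qed
  have dv: "N dvd Omega p f w j" for j
  proof (induction j)
    case 0 then show ?case by fact
  next
    case (Suc j)
    have "N dvd int p * Omega p f w (Suc j)"
      using Omega_rec[OF assms(2), of p w j] Suc unfolding N_def by simp
    then show ?case using coprime_pN[OF assms(2), of p] unfolding N_def
      by (metis coprime_commute coprime_dvd_mult_right_iff)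
  qed
  define g where "g = (\<lambda>j. Omega p f w j div N)"
  have Om: "Omega p f w j = N * g j" for j using dv[of j] unfolding g_def by simp
  have grec: "w (j mod f) = int p * g (Suc j) - g j" for j
  proof -
    have "N * (int p * g (Suc j)) = N * (g j + w (j mod f))"
      using Omega_rec[OF assms(2), of p w j] Om[of j] Om[of "Suc j"] unfolding N_def
      by (simp add: algebra_simps)
    then show ?thesis using Npos by simp
  qed
  have gper: "g (j mod f) = g j" for j unfolding g_def by (simp add: Omega_mod)
  have wJ: "w i = rr a b i + 2 * x i + 1 - int e - n i" if "i \<in> J" for i
    using that unfolding w_def al_def be_def rr_def by simp
  have wnJ: "w i = 2 * x i - rr a b i + 1 - int e - n i" if "i \<notin> J" for i
    using that unfolding w_def al_def be_def rr_def by simp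
  have rrr: "1 \<le> rr a b i \<and> rr a b i \<le> int p" if "i < f" for i
    using serre_wt that unfolding rr_def by auto
  have wub: "w i \<le> int p - 1" if "i < f" for i
    using wJ[of i] wnJ[of i] rrr[OF that] xr[rule_format, OF that] weakly_generic[rule_format, OF that]
    by (cases "i \<in> J") auto
  have wlb: "w i \<ge> 1 - 2 * int p" if "i < f" for i
    using wJ[of i] wnJ[of i] rrr[OF that] xr[rule_format, OF that] weakly_generic[rule_format, OF that]
    by (cases "i \<in> J") auto
  have wnJub: "w i \<le> -2" if "i < f" "i \<notin> J" for i
    using wnJ[of i] rrr[OF that(1)] xr[rule_format, OF that(1)] weakly_generic[rule_format, OF that(1)] that by auto
  have gall: "g j \<in> g ` {..<f}" for j
    using gper[of j] assms(2) by (metis image_eqI lessThan_iff mod_less_divisor neq0_conv not_one_le_zero)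
  define G where "G = Max (g ` {..<f})"
  define L where "L = Min (g ` {..<f})"
  have fin: "finite (g ` {..<f})" "g ` {..<f} \<noteq> {}" using assms(2) by (auto simp: lessThan_empty_iff)
  have gG: "g j \<le> G" for j using gall[of j] fin unfolding G_def by simp
  have gL: "L \<le> g j" for j using gall[of j] fin unfolding L_def by simp
  obtain j0 where j0: "j0 < f" "g j0 = G" using Max_in[OF fin] unfolding G_def by auto
  obtain j1 where j1: "j1 < f" "g j1 = L" using Min_in[OF fin] unfolding L_def by auto
  have G1: "G \<le> 1"
  proof (rule ccontr)
    assume "\<not> G \<le> 1"
    then have G2: "G \<ge> 2" by simp
    let ?j = "j0 + f - 1"
    have "Suc ?j = j0 + f" using assms(2) by simp
    then have "g (Suc ?j) = G" using gper[of "j0 + f"] gper[of j0] j0 by simp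
    then have e: "w (?j mod f) = int p * G - g ?j" using grec[of ?j] by simp
    have "(int p - 1) * G \<ge> (int p - 1) * 2" using G2 p2 by (intro mult_left_mono) auto
    then have "int p * G - G \<ge> 2 * int p - 2" by (simp add: algebra_simps)
    moreover have "w (?j mod f) \<le> int p - 1" using wub assms(2) by simp
    ultimately show False using e gG[of ?j] p2 by linarith
  qed
  have L2: "L \<ge> -2" if "p \<ge> 3"
  proof (rule ccontr)
    assume "\<not> L \<ge> -2"
    then have L3: "L \<le> -3" by simp
    let ?j = "j1 + f - 1"
    have "Suc ?j = j1 + f" using assms(2) by simp
    then have "g (Suc ?j) = L" using gper[of "j1 + f"] gper[of j1] j1 by simp
    then have e: "w (?j mod f) = int p * L - g ?j" using grec[of ?j] by simp
    have "(int p - 1) * L \<le> (int p - 1) * (-3)" using L3 p2 by (intro mult_left_mono) auto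
    then have "int p * L - L \<le> 3 - 3 * int p" by (simp add: algebra_simps)
    moreover have "w (?j mod f) \<ge> 1 - 2 * int p" using wlb assms(2) by simp
    ultimately show False using e gL[of ?j] that by linarith
  qed
  have prop1: "g j = 1" if "g k = 1" for j k
  proof -
    define M where "M = k + f * j"
    have gM: "g M = 1" using gper[of M] gper[of k] that unfolding M_def by simp
    have down: "g (M - d) = 1" if "d \<le> M" for d
      using that
    proof (induction d)
      case 0 then show ?case using gM by simp
    next
      case (Suc d)
      let ?i = "M - Suc d"
      have "Suc ?i = M - d" using Suc.prems by simp
      then have "w (?i mod f) = int p - g ?i" using grec[of ?i] Suc by simp
      moreover have "w (?i mod f) \<le> int p - 1" using wub assms(2) by simp
      ultimately show ?case using gG[of ?i] G1 by linarith
    qed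
    have "j \<le> M" unfolding M_def using assms(2) by (simp add: trans_le_add2)
    from down[of "M - j"] this show ?thesis by simp
  qed
  have dich: "(\<forall>j. g j = 1) \<or> (\<forall>j. g j \<le> 0)"
  proof (cases "\<exists>k. g k = 1")
    case True then show ?thesis using prop1 by blast
  next
    case False
    have "g j \<le> 0" for j proof -
      have "g j \<noteq> 1" using False by blast
      then show ?thesis using gG[of j] G1 by linarith
    qed
    then show ?thesis by blast
  qed
  show ?thesis
  proof (intro allI impI ballI)
    fix j c assume jf: "j < f" and cI: "c \<in> IJ e a b J x j"
    let ?s = "sJ a b J x" and ?t = "tJ e a b J x" and ?r = "rr a b"
    have pN: "int p dvd N + 1" unfolding N_def using assms(2) by (simp add: dvd_power)
    have pO: "int p dvd Omega p f (\<lambda>i. ?s i - ?t i) j - (?s j - ?t j)"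
      by (rule Omega_modp[OF jf])
    have eq: "xiJ p f e a b J x j - c * N - (c - ?t j)
       = (N + 1) * (?s j - c) + (Omega p f (\<lambda>i. ?s i - ?t i) j - (?s j - ?t j))"
      unfolding xiJ_def N_def by (simp add: algebra_simps)
    have "int p dvd xiJ p f e a b J x j - c * N - (c - ?t j)"
      unfolding eq by (rule dvd_add[OF dvd_mult2[OF pN] pO])
    then have vpiff: "vp p (xiJ p f e a b J x j - c * N) > 0 \<longleftrightarrow> int p dvd (c - ?t j)"
      using vp_pos_iff[OF assms(1)] by (metis dvd_add_right_iff diff_add_cancel)
    have comb: "int p dvd (c - ?t j) \<longleftrightarrow> (c = ?t j \<or>
              ((\<forall>k<f. ?t k = 0 \<and> ?s k = int p - 1 + int e \<and> ?r k = int p) \<and> c = int p))"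
    proof
      assume "c = ?t j \<or> ((\<forall>k<f. ?t k = 0 \<and> ?s k = int p - 1 + int e \<and> ?r k = int p) \<and> c = int p)"
      then show "int p dvd (c - ?t j)" using jf by auto
    next
      assume dvd: "int p dvd (c - ?t j)"
      show "c = ?t j \<or> ((\<forall>k<f. ?t k = 0 \<and> ?s k = int p - 1 + int e \<and> ?r k = int p) \<and> c = int p)"
      proof (cases "c = ?t j")
        case True then show ?thesis by simp
      next
        case False
        note ne = False
        show ?thesis
        proof (rule disjI2)
        from dvd obtain q where q: "c - ?t j = int p * q" by (auto elim: dvdE)
        have wg: "w j = int p * g (Suc j) - g j" using grec[of j] jf by simp
        have xj: "0 \<le> x j" "x j \<le> int e - 1" using xr jf by auto
        have nj: "int e \<le> n j" "n j \<le> int p - int e" using weakly_generic jf by auto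
        have rj: "1 \<le> ?r j" "?r j \<le> int p" using rrr[OF jf] by auto
        show "(\<forall>k<f. ?t k = 0 \<and> ?s k = int p - 1 + int e \<and> ?r k = int p) \<and> c = int p"
        proof (cases "j \<in> J")
          case False
          have sj: "?s j = x j" and tj: "?t j = ?r j - 1 + int e - x j"
            using False unfolding sJ_def tJ_def rr_def by auto
          have cr: "0 \<le> c" "c \<le> x j - 1" using cI False unfolding IJ_def sJ_def by auto
          have e2: "int e \<ge> 2" using cr xj by linarith
          have p4: "int p \<ge> 4" using nj e2 by linarith
          have "q = -1"
          proof -
            have "int p * q < int p * 1" using q cr tj xj rj nj by linarith
            then have "q < 1" using p2 by (simp add: mult_less_cancel_left)
            moreover have "int p * q > int p * (-2)" using q cr tj xj rj nj by linarith
            then have "q > -2" using p2 mult_less_cancel_left_pos[of "int p" "-2" q] by linarith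
            moreover have "q \<noteq> 0" using q ne by auto
            ultimately show ?thesis by linarith
          qed
          then have cv: "c = ?t j - int p" using q by simp
          have wj: "w j = 2 * x j - ?r j + 1 - int e - n j" using wnJ[OF False] .
          have A: "w j \<le> -1 - int p" "w j \<ge> 1 - 2 * int p + int e"
            using wj cv cr tj xj rj nj by linarith+
          show ?thesis
          proof (cases "\<forall>j. g j = 1")
            case True
            then have "w j = int p - 1" using wg by simp
            then show ?thesis using A p2 by linarith
          next
            case nall: False
            then have le0: "g i \<le> 0" for i using dich by blast
            have ge: "g i \<ge> -2" for i using L2 gL[of i] p4 by linarith
            have "g (Suc j) \<in> {-2, -1, 0}" using le0[of "Suc j"] ge[of "Suc j"] by auto
            then show ?thesis using A wg le0[of j] ge[of j] e2 by auto
          qed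
        next
          case True
          have sj: "?s j = ?r j + x j" and tj: "?t j = int e - 1 - x j"
            using True unfolding sJ_def tJ_def rr_def by auto
          have cr: "?r j \<le> c" "c \<le> ?r j + x j - 1" using cI True ne unfolding IJ_def sJ_def tJ_def rr_def
            by auto
          have e2: "int e \<ge> 2" using cr xj by linarith
          have p4: "int p \<ge> 4" using nj e2 by linarith
          have "q = 1"
          proof -
            have "int p * q < int p * 2" using q cr tj xj rj nj by linarith
            then have "q < 2" using p2 by (simp add: mult_less_cancel_left)
            moreover have "int p * q > int p * (-1)" using q cr tj xj rj nj by linarith
            then have "q > -1" using p2 mult_less_cancel_left_pos[of "int p" "-1" q] by linarith
            moreover have "q \<noteq> 0" using q ne by auto
            ultimately show ?thesis by linarith
          qed
          then have cv: "c = ?t j + int p" using q by simp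
          have wj: "w j = ?r j + 2 * x j + 1 - int e - n j" using wJ[OF True] .
          have A: "w j \<ge> 3" using wj cv cr tj xj rj nj e2 by linarith
          have all1: "\<forall>i. g i = 1"
          proof (rule ccontr)
            assume "\<not> (\<forall>i. g i = 1)"
            then have le0: "g i \<le> 0" for i using dich by blast
            have ge: "g i \<ge> -2" for i using L2 gL[of i] p4 by linarith
            have "int p * g (Suc j) \<le> 0" using le0[of "Suc j"] by (simp add: mult_nonneg_nonpos)
            then show False using A wg ge[of j] by linarith
          qed
          have wi: "w i = int p - 1" if "i < f" for i using grec[of i] all1 that by simp
          have glob: "i \<in> J \<and> ?r i = int p \<and> x i = int e - 1" if "i < f" for i
          proof -
            have "i \<in> J" using wi[OF that] wnJub[OF that] p2 by force
            moreover then have "?r i + 2 * x i + 1 - int e - n i = int p - 1" using wi[OF that] wJ by simp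
            ultimately show ?thesis using rrr[OF that] xr weakly_generic that by force
          qed
          show ?thesis
          proof
            show "\<forall>k<f. ?t k = 0 \<and> ?s k = int p - 1 + int e \<and> ?r k = int p"
            proof (intro allI impI)
              fix k assume "k < f"
              from glob[OF this] show "?t k = 0 \<and> ?s k = int p - 1 + int e \<and> ?r k = int p"
                unfolding tJ_def sJ_def rr_def by auto
            qed
            show "c = int p" using cv tj glob[OF jf] by simp
          qed
        qed
      qed
      qed
    qed
    show "(vp p (xiJ p f e a b J x j - c * (int p ^ f - 1)) > 0 \<longleftrightarrow>
             (c = ?t j \<or> ((\<forall>k<f. ?t k = 0 \<and> ?s k = int p - 1 + int e \<and> ?r k = int p) \<and> c = int p)))"
      using vpiff comb unfolding N_def by simp
  qed
qed

end
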